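(* Let $R$ be an order and $X$ a (possibly infinite) set of non-zero ideals of $R$. Then $\overline{X}\subseteq\mathcal{I}(R)$ if and only if $X$ has a coprime basis. Moreover, if $X$ has a coprime basis, then $\{I\in\overline{X}: \#\{J\in\overline{X}: I\subseteq J\}=2\}$ is the minimal coprime basis of $X$.
   Context: An order is a domain whose additive group is isomorphic to $\mathbb{Z}^n$ for some $n$; $K=\mathrm{Q}(R)$ denotes its field of fractions. For $R$-submodules $I,J$ of $K$, $I:J=\{x\in K: xJ\subseteq I\}$. An invertible ideal of $R$ is an $R$-submodule $I\subseteq K$ with $IJ=R$ for some $R$-submodule $J\subseteq K$; $\mathcal{I}(R)$ is the group of invertible ideals. $\overline{X}$ denotes the closure of $X\cup\{R\}$ under addition, multiplication, and integral division, i.e. forming $I:J$ for ideals $I,J\subseteq R$ with $J$ invertible and $I:J\subseteq R$. A coprime basis for $X$ is a set $B$ of invertible ideals strictly contained in $R$ which are pairwise coprime (i.e. $\mathfrak{a}+\mathfrak{b}=R$ for distinct $\mathfrak{a},\mathfrak{b}\in B$) and such that $X$ is contained in the subgroup $\langle B\rangle$ of $\mathcal{I}(R)$ generated by $B$. Coprime bases are partially ordered by $B\le C$ iff $\langle B\rangle\subseteq\langle C\rangle$. *)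

theory Defs
  imports Main
begin

text \<open>An order is modelled as a subring R of an ambient field 'a whose additive
group is free abelian of finite rank (has a finite Z-basis).\<close>

definition is_order :: "'a::field set \<Rightarrow> bool" where
  "is_order R \<longleftrightarrow>
     0 \<in> R \<and> 1 \<in> R \<and>
     (\<forall>x\<in>R. \<forall>y\<in>R. x + y \<in> R \<and> x - y \<in> R \<and> x * y \<in> R) \<and>
     (\<exists>(n::nat) (b::nat \<Rightarrow> 'a). (\<forall>i<n. b i \<in> R) \<and>
        (\<forall>r\<in>R. \<exists>!c::nat \<Rightarrow> int. (\<forall>i\<ge>n. c i = 0) \<and> r = (\<Sum>i<n. of_int (c i) * b i)))"

definition frac_field :: "'a::field set \<Rightarrow> 'a set" where
  "frac_field R = {a / b | a b. a \<in> R \<and> b \<in> R \<and> b \<noteq> 0}"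

definition submodule :: "'a::field set \<Rightarrow> 'a set \<Rightarrow> bool" where
  "submodule R M \<longleftrightarrow> M \<subseteq> frac_field R \<and> 0 \<in> M \<and>
     (\<forall>x\<in>M. \<forall>y\<in>M. x + y \<in> M) \<and> (\<forall>r\<in>R. \<forall>x\<in>M. r * x \<in> M)"

definition ideal_of :: "'a::field set \<Rightarrow> 'a set \<Rightarrow> bool" where
  "ideal_of R I \<longleftrightarrow> submodule R I \<and> I \<subseteq> R"

definition idl_sum :: "'a::field set \<Rightarrow> 'a set \<Rightarrow> 'a set" where
  "idl_sum I J = {x + y | x y. x \<in> I \<and> y \<in> J}"

definition idl_mult :: "'a::field set \<Rightarrow> 'a set \<Rightarrow> 'a set" where
  "idl_mult I J = {(\<Sum>i<n. f i * g i) | (n::nat) f g. \<forall>i<n. f i \<in> I \<and> g i \<in> J}"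

definition colon :: "'a::field set \<Rightarrow> 'a set \<Rightarrow> 'a set \<Rightarrow> 'a set" where
  "colon R I J = {x \<in> frac_field R. \<forall>y\<in>J. x * y \<in> I}"

definition invertible :: "'a::field set \<Rightarrow> 'a set \<Rightarrow> bool" where
  "invertible R I \<longleftrightarrow> submodule R I \<and> (\<exists>J. submodule R J \<and> idl_mult I J = R)"

inductive_set ideal_closure :: "'a::field set \<Rightarrow> 'a set set \<Rightarrow> 'a set set"
  for R :: "'a set" and X :: "'a set set" where
  base_R: "R \<in> ideal_closure R X"
| base_X: "I \<in> X \<Longrightarrow> I \<in> ideal_closure R X"
| add: "I \<in> ideal_closure R X \<Longrightarrow> J \<in> ideal_closure R X \<Longrightarrow> idl_sum I J \<in> ideal_closure R X"
| mult: "I \<in> ideal_closure R X \<Longrightarrow> J \<in> ideal_closure R X \<Longrightarrow> idl_mult I J \<in> ideal_closure R X"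
| div: "I \<in> ideal_closure R X \<Longrightarrow> J \<in> ideal_closure R X \<Longrightarrow> ideal_of R I \<Longrightarrow> ideal_of R J \<Longrightarrow>
        invertible R J \<Longrightarrow> colon R I J \<subseteq> R \<Longrightarrow> colon R I J \<in> ideal_closure R X"

text \<open>Subgroup of the group of invertible ideals generated by B (inverse of I is R:I).\<close>
inductive_set gen_subgroup :: "'a::field set \<Rightarrow> 'a set set \<Rightarrow> 'a set set"
  for R :: "'a set" and B :: "'a set set" where
  one: "R \<in> gen_subgroup R B"
| gen: "I \<in> B \<Longrightarrow> I \<in> gen_subgroup R B"
| inv: "I \<in> B \<Longrightarrow> colon R R I \<in> gen_subgroup R B"
| mult: "I \<in> gen_subgroup R B \<Longrightarrow> J \<in> gen_subgroup R B \<Longrightarrow> idl_mult I J \<in> gen_subgroup R B"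

definition coprime_basis :: "'a::field set \<Rightarrow> 'a set set \<Rightarrow> 'a set set \<Rightarrow> bool" where
  "coprime_basis R X B \<longleftrightarrow>
     (\<forall>I\<in>B. ideal_of R I \<and> invertible R I \<and> I \<noteq> R) \<and>
     (\<forall>I\<in>B. \<forall>J\<in>B. I \<noteq> J \<longrightarrow> idl_sum I J = R) \<and>
     X \<subseteq> gen_subgroup R B"

end

theory Submission
  imports Defs
begin


locale rctx =
  fixes R :: "'a::field set"
  assumes R0: "0 \<in> R" and R1: "1 \<in> R"
    and Radd: "\<And>x y. x \<in> R \<Longrightarrow> y \<in> R \<Longrightarrow> x + y \<in> R"
    and Rdiff: "\<And>x y. x \<in> R \<Longrightarrow> y \<in> R \<Longrightarrow> x - y \<in> R"
    and Rmult: "\<And>x y. x \<in> R \<Longrightarrow> y \<in> R \<Longrightarrow> x * y \<in> R"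
begin

lemma Rneg: "x \<in> R \<Longrightarrow> - x \<in> R"
  using Rdiff[OF R0, of x] by simp

lemma frac_iff: "x \<in> frac_field R \<longleftrightarrow> (\<exists>a b. x = a / b \<and> a \<in> R \<and> b \<in> R \<and> b \<noteq> 0)"
  unfolding frac_field_def by auto

lemma R_frac: "R \<subseteq> frac_field R"
proof
  fix x assume "x \<in> R"
  then show "x \<in> frac_field R" unfolding frac_iff using R1
    by (intro exI[of _ x] exI[of _ 1]) auto
qed

lemma frac_add: "x \<in> frac_field R \<Longrightarrow> y \<in> frac_field R \<Longrightarrow> x + y \<in> frac_field R"
proof -
  assume "x \<in> frac_field R" "y \<in> frac_field R"
  then obtain a b c d where "a \<in> R" "b \<in> R" "b \<noteq> 0" "x = a / b" "c \<in> R" "d \<in> R" "d \<noteq> 0" "y = c / d"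
    unfolding frac_iff by auto
  then have "x + y = (a*d + c*b) / (b*d)" by (simp add: field_simps)
  then show ?thesis unfolding frac_iff using \<open>a \<in> R\<close> \<open>b \<in> R\<close> \<open>c \<in> R\<close> \<open>d \<in> R\<close> \<open>b \<noteq> 0\<close> \<open>d \<noteq> 0\<close>
    by (intro exI[of _ "a*d + c*b"] exI[of _ "b*d"]) (auto intro: Radd Rmult)
qed

lemma frac_mult: "x \<in> frac_field R \<Longrightarrow> y \<in> frac_field R \<Longrightarrow> x * y \<in> frac_field R"
proof -
  assume "x \<in> frac_field R" "y \<in> frac_field R"
  then obtain a b c d where "a \<in> R" "b \<in> R" "b \<noteq> 0" "x = a / b" "c \<in> R" "d \<in> R" "d \<noteq> 0" "y = c / d"
    unfolding frac_iff by auto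
  then have "x * y = (a*c) / (b*d)" by (simp add: field_simps)
  then show ?thesis unfolding frac_iff using \<open>a \<in> R\<close> \<open>b \<in> R\<close> \<open>c \<in> R\<close> \<open>d \<in> R\<close> \<open>b \<noteq> 0\<close> \<open>d \<noteq> 0\<close>
    by (intro exI[of _ "a*c"] exI[of _ "b*d"]) (auto intro: Rmult)
qed

lemma frac0: "0 \<in> frac_field R" using R0 R_frac by auto

lemma sub_R: "submodule R R"
  unfolding submodule_def using R_frac R0 Radd Rmult by auto

lemma ideal_R: "ideal_of R R"
  unfolding ideal_of_def using sub_R by auto

lemma sum_closed:
  assumes "0 \<in> M" "\<And>x y. x \<in> M \<Longrightarrow> y \<in> M \<Longrightarrow> x + y \<in> M" "\<And>i. i < (n::nat) \<Longrightarrow> h i \<in> M"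
  shows "(\<Sum>i<n. h i) \<in> M"
proof -
  have "\<forall>m\<le>n. (\<Sum>i<m. h i) \<in> M"
  proof (intro allI impI)
    fix m assume "m \<le> n" then show "(\<Sum>i<m. h i) \<in> M"
    proof (induction m)
      case 0 then show ?case using assms(1) by simp
    next
      case (Suc m) then show ?case using assms(2)[of "sum h {..<m}" "h m"] assms(3)[of m] by simp
    qed
  qed
  then show ?thesis by blast
qed

lemma idl_mult_iff: "x \<in> idl_mult I J \<longleftrightarrow> (\<exists>(n::nat) f g. x = (\<Sum>i<n. f i * g i) \<and> (\<forall>i<n. f i \<in> I \<and> g i \<in> J))"
  unfolding idl_mult_def by auto

lemma mult_in: "a \<in> I \<Longrightarrow> b \<in> J \<Longrightarrow> a * b \<in> idl_mult I J"
  unfolding idl_mult_iff by (rule exI[of _ 1], rule exI[of _ "\<lambda>_. a"], rule exI[of _ "\<lambda>_. b"]) auto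

lemma mult_zero: "0 \<in> idl_mult I J"
  unfolding idl_mult_iff by (rule exI[of _ 0]) auto

lemma mult_add1:
  assumes "x \<in> idl_mult I J" "a \<in> I" "b \<in> J"
  shows "x + a * b \<in> idl_mult I J"
proof -
  obtain n :: nat and f g where x: "x = (\<Sum>i<n. f i * g i)" "\<forall>i<n. f i \<in> I \<and> g i \<in> J"
    using assms(1) unfolding idl_mult_iff by blast
  have "x + a * b = (\<Sum>i<Suc n. (f(n:=a)) i * (g(n:=b)) i)"
    using x(1) by simp
  moreover have "\<forall>i<Suc n. (f(n:=a)) i \<in> I \<and> (g(n:=b)) i \<in> J"
    using x(2) assms(2,3) by (auto simp: less_Suc_eq)
  ultimately show ?thesis unfolding idl_mult_iff by blast
qed

lemma mult_add:
  assumes "x \<in> idl_mult I J" "y \<in> idl_mult I J"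
  shows "x + y \<in> idl_mult I J"
proof -
  obtain n :: nat and f g where y: "y = (\<Sum>i<n. f i * g i)" "\<forall>i<n. f i \<in> I \<and> g i \<in> J"
    using assms(2) unfolding idl_mult_iff by blast
  have "\<forall>m\<le>n. x + (\<Sum>i<m. f i * g i) \<in> idl_mult I J"
  proof (intro allI impI)
    fix m assume "m \<le> n" then show "x + (\<Sum>i<m. f i * g i) \<in> idl_mult I J"
    proof (induction m)
      case 0 then show ?case using assms(1) by simp
    next
      case (Suc m)
      then have "x + (\<Sum>i<m. f i * g i) + f m * g m \<in> idl_mult I J"
        using y(2) by (intro mult_add1) auto
      then show ?case by (simp add: add.assoc)
    qed
  qed
  then show ?thesis using y(1) by blast
qed

lemma mult_least:
  assumes "0 \<in> M" "\<And>x y. x \<in> M \<Longrightarrow> y \<in> M \<Longrightarrow> x + y \<in> M"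
    "\<And>a b. a \<in> I \<Longrightarrow> b \<in> J \<Longrightarrow> a * b \<in> M"
  shows "idl_mult I J \<subseteq> M"
proof
  fix x assume "x \<in> idl_mult I J"
  then obtain n :: nat and f g where x: "x = (\<Sum>i<n. f i * g i)" "\<forall>i<n. f i \<in> I \<and> g i \<in> J"
    unfolding idl_mult_iff by blast
  show "x \<in> M" unfolding x(1) by (rule sum_closed) (use assms x(2) in auto)
qed

lemma mult_mono: "I \<subseteq> I' \<Longrightarrow> J \<subseteq> J' \<Longrightarrow> idl_mult I J \<subseteq> idl_mult I' J'"
  unfolding idl_mult_def by blast

lemma mult_comm1: "idl_mult I J \<subseteq> idl_mult J I"
proof
  fix x assume "x \<in> idl_mult I J"
  then obtain n :: nat and f g where x: "x = (\<Sum>i<n. f i * g i)" "\<forall>i<n. f i \<in> I \<and> g i \<in> J"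
    unfolding idl_mult_iff by blast
  show "x \<in> idl_mult J I" unfolding idl_mult_iff
    by (rule exI[of _ n], rule exI[of _ g], rule exI[of _ f]) (use x in \<open>auto simp: mult.commute\<close>)
qed

lemma mult_comm: "idl_mult I J = idl_mult J I"
  using mult_comm1 by blast

lemma sub_sum_closed: "submodule R M \<Longrightarrow> (\<And>i. i < (n::nat) \<Longrightarrow> h i \<in> M) \<Longrightarrow> (\<Sum>i<n. h i) \<in> M"
  by (rule sum_closed) (auto simp: submodule_def)

lemma mult_scal:
  assumes "submodule R I" "r \<in> R" "x \<in> idl_mult I J"
  shows "r * x \<in> idl_mult I J"
proof -
  obtain n :: nat and f g where x: "x = (\<Sum>i<n. f i * g i)" "\<forall>i<n. f i \<in> I \<and> g i \<in> J"
    using assms(3) unfolding idl_mult_iff by blast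
  have "r * x = (\<Sum>i<n. (r * f i) * g i)" unfolding x(1) by (simp add: sum_distrib_left mult.assoc)
  moreover have "\<forall>i<n. r * f i \<in> I \<and> g i \<in> J" using x(2) assms(1,2) unfolding submodule_def by auto
  ultimately show ?thesis unfolding idl_mult_iff
    by (intro exI[of _ n] exI[of _ "\<lambda>i. r * f i"] exI[of _ g]) auto
qed

lemma sub_mult: "submodule R I \<Longrightarrow> submodule R J \<Longrightarrow> submodule R (idl_mult I J)"
proof -
  assume I: "submodule R I" and J: "submodule R J"
  have "idl_mult I J \<subseteq> frac_field R"
  proof (rule mult_least)
    fix a b assume "a \<in> I" "b \<in> J" then show "a * b \<in> frac_field R"
      using I J frac_mult unfolding submodule_def by blast
  qed (use frac0 frac_add in auto)
  then show ?thesis unfolding submodule_def using mult_zero mult_add mult_scal[OF I] by blast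
qed

lemma mult_subR: "I \<subseteq> R \<Longrightarrow> J \<subseteq> R \<Longrightarrow> idl_mult I J \<subseteq> R"
  by (rule mult_least) (auto intro: R0 Radd Rmult)

lemma ideal_mult: "ideal_of R I \<Longrightarrow> ideal_of R J \<Longrightarrow> ideal_of R (idl_mult I J)"
  unfolding ideal_of_def using sub_mult mult_subR by blast

lemma mult_R: "submodule R M \<Longrightarrow> idl_mult R M = M"
proof
  assume M: "submodule R M"
  show "idl_mult R M \<subseteq> M" by (rule mult_least) (use M in \<open>auto simp: submodule_def\<close>)
  show "M \<subseteq> idl_mult R M" using mult_in[OF R1, of _ M] by force
qed

lemma mult_R2: "submodule R M \<Longrightarrow> idl_mult M R = M"
  using mult_R mult_comm by metis

lemma mult_assoc1:
  assumes I: "submodule R I" and J: "submodule R J" and K: "submodule R K"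
  shows "idl_mult (idl_mult I J) K \<subseteq> idl_mult I (idl_mult J K)"
proof (rule mult_least)
  show "0 \<in> idl_mult I (idl_mult J K)" by (rule mult_zero)
  show "\<And>x y. x \<in> idl_mult I (idl_mult J K) \<Longrightarrow> y \<in> idl_mult I (idl_mult J K) \<Longrightarrow> x + y \<in> idl_mult I (idl_mult J K)"
    by (rule mult_add)
  fix u c assume u: "u \<in> idl_mult I J" and c: "c \<in> K"
  obtain n :: nat and f g where x: "u = (\<Sum>i<n. f i * g i)" "\<forall>i<n. f i \<in> I \<and> g i \<in> J"
    using u unfolding idl_mult_iff by blast
  have "u * c = (\<Sum>i<n. f i * (g i * c))" unfolding x(1) by (simp add: sum_distrib_right mult.assoc)
  also have "\<dots> \<in> idl_mult I (idl_mult J K)"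
    by (rule sum_closed) (use x(2) c in \<open>auto intro: mult_zero mult_add mult_in\<close>)
  finally show "u * c \<in> idl_mult I (idl_mult J K)" .
qed

lemma mult_assoc:
  assumes I: "submodule R I" and J: "submodule R J" and K: "submodule R K"
  shows "idl_mult (idl_mult I J) K = idl_mult I (idl_mult J K)"
proof
  show "idl_mult (idl_mult I J) K \<subseteq> idl_mult I (idl_mult J K)" by (rule mult_assoc1[OF assms])
  have "idl_mult I (idl_mult J K) = idl_mult (idl_mult K J) I" by (simp add: mult_comm)
  also have "\<dots> \<subseteq> idl_mult K (idl_mult J I)" by (rule mult_assoc1[OF K J I])
  also have "\<dots> = idl_mult (idl_mult I J) K" by (simp add: mult_comm)
  finally show "idl_mult I (idl_mult J K) \<subseteq> idl_mult (idl_mult I J) K" .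
qed

end

context rctx begin

lemma idl_sum_iff: "x \<in> idl_sum I J \<longleftrightarrow> (\<exists>a b. x = a + b \<and> a \<in> I \<and> b \<in> J)"
  unfolding idl_sum_def by auto

lemma sub_0: "submodule R M \<Longrightarrow> 0 \<in> M" unfolding submodule_def by blast
lemma sub_add: "submodule R M \<Longrightarrow> x \<in> M \<Longrightarrow> y \<in> M \<Longrightarrow> x + y \<in> M" unfolding submodule_def by blast
lemma sub_scal: "submodule R M \<Longrightarrow> r \<in> R \<Longrightarrow> x \<in> M \<Longrightarrow> r * x \<in> M" unfolding submodule_def by blast
lemma sub_frac: "submodule R M \<Longrightarrow> x \<in> M \<Longrightarrow> x \<in> frac_field R" unfolding submodule_def by blast
lemma submoduleI: "M \<subseteq> frac_field R \<Longrightarrow> 0 \<in> M \<Longrightarrow> (\<And>x y. x \<in> M \<Longrightarrow> y \<in> M \<Longrightarrow> x + y \<in> M)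
  \<Longrightarrow> (\<And>r x. r \<in> R \<Longrightarrow> x \<in> M \<Longrightarrow> r * x \<in> M) \<Longrightarrow> submodule R M"
  unfolding submodule_def by blast

lemma sub_sum: assumes I: "submodule R I" and J: "submodule R J" shows "submodule R (idl_sum I J)"
proof (rule submoduleI)
  show "idl_sum I J \<subseteq> frac_field R"
  proof
    fix x assume "x \<in> idl_sum I J"
    then obtain a b where "x = a + b" "a \<in> I" "b \<in> J" unfolding idl_sum_iff by blast
    then show "x \<in> frac_field R" using sub_frac[OF I] sub_frac[OF J] frac_add by blast
  qed
  show "0 \<in> idl_sum I J"
  proof -
    have "(0::'a) = 0 + 0" by simp
    then show ?thesis using sub_0[OF I] sub_0[OF J] unfolding idl_sum_iff by blast
  qed
  show "x + y \<in> idl_sum I J" if xy: "x \<in> idl_sum I J" "y \<in> idl_sum I J" for x y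
  proof -
    obtain a b a' b' where "x = a + b" "a \<in> I" "b \<in> J" "y = a' + b'" "a' \<in> I" "b' \<in> J"
      using xy unfolding idl_sum_iff by blast
    then have "x + y = (a + a') + (b + b')" "a + a' \<in> I" "b + b' \<in> J"
      using sub_add[OF I] sub_add[OF J] by (auto simp: algebra_simps)
    then show ?thesis unfolding idl_sum_iff by blast
  qed
  show "r * x \<in> idl_sum I J" if rx: "r \<in> R" "x \<in> idl_sum I J" for r x
  proof -
    obtain a b where "x = a + b" "a \<in> I" "b \<in> J"
      using rx unfolding idl_sum_iff by blast
    then have "r * x = r * a + r * b" "r * a \<in> I" "r * b \<in> J"
      using sub_scal[OF I] sub_scal[OF J] rx by (auto simp: distrib_left)
    then show ?thesis unfolding idl_sum_iff by blast
  qed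
qed

lemma sum_least: "I \<subseteq> M \<Longrightarrow> J \<subseteq> M \<Longrightarrow> (\<And>x y. x \<in> M \<Longrightarrow> y \<in> M \<Longrightarrow> x + y \<in> M) \<Longrightarrow> idl_sum I J \<subseteq> M"
  unfolding idl_sum_def by blast

lemma ideal_sum: "ideal_of R I \<Longrightarrow> ideal_of R J \<Longrightarrow> ideal_of R (idl_sum I J)"
  unfolding ideal_of_def using sub_sum[of I J] sum_least[of I R J, OF _ _ Radd] by blast

lemma sum_upper1: "0 \<in> J \<Longrightarrow> I \<subseteq> idl_sum I J"
proof
  fix x assume "0 \<in> J" "x \<in> I"
  moreover have "x = x + 0" by simp
  ultimately show "x \<in> idl_sum I J" unfolding idl_sum_iff by blast
qed

lemma sum_upper2: "0 \<in> I \<Longrightarrow> J \<subseteq> idl_sum I J"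
proof
  fix x assume "0 \<in> I" "x \<in> J"
  moreover have "x = 0 + x" by simp
  ultimately show "x \<in> idl_sum I J" unfolding idl_sum_iff by blast
qed

lemma sum_comm1: "x \<in> idl_sum I J \<Longrightarrow> x \<in> idl_sum J I"
  unfolding idl_sum_iff by (metis add.commute)

lemma sum_comm: "idl_sum I J = idl_sum J I"
  using sum_comm1 by blast

lemma coprimeI:
  assumes "ideal_of R I" "ideal_of R J" "1 \<in> idl_sum I J"
  shows "idl_sum I J = R"
proof
  show "idl_sum I J \<subseteq> R" using assms(1,2) ideal_sum unfolding ideal_of_def by blast
  show "R \<subseteq> idl_sum I J"
  proof
    fix r assume r: "r \<in> R"
    have "submodule R (idl_sum I J)" using assms sub_sum unfolding ideal_of_def by blast
    then have "r * 1 \<in> idl_sum I J" using r assms(3) sub_scal by blast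
    then show "r \<in> idl_sum I J" by simp
  qed
qed

lemma coprime_mult:
  assumes b: "ideal_of R b" and c: "ideal_of R c" and d: "ideal_of R d"
    and bc: "idl_sum b c = R" and bd: "idl_sum b d = R"
  shows "idl_sum b (idl_mult c d) = R"
proof (rule coprimeI[OF b ideal_mult[OF c d]])
  have "1 \<in> idl_sum b c" "1 \<in> idl_sum b d" using bc bd R1 by auto
  then obtain b1 c1 b2 d2 where 1: "1 = b1 + c1" "b1 \<in> b" "c1 \<in> c"
    and 2: "1 = b2 + d2" "b2 \<in> b" "d2 \<in> d" unfolding idl_sum_iff by blast
  have "1 = b1 + c1 * (b2 + d2)" using 1 2 by simp
  also have "\<dots> = (b1 + c1 * b2) + c1 * d2" by (simp add: algebra_simps)
  finally have e: "1 = (b1 + c1 * b2) + c1 * d2" .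
  have "c1 \<in> R" using 1 c unfolding ideal_of_def by blast
  moreover have bs: "submodule R b" using b unfolding ideal_of_def by blast
  ultimately have "b1 + c1 * b2 \<in> b" using 1 2 sub_add[OF bs] sub_scal[OF bs] by blast
  moreover have "c1 * d2 \<in> idl_mult c d" using 1 2 mult_in by blast
  ultimately show "1 \<in> idl_sum b (idl_mult c d)" using e unfolding idl_sum_iff by blast
qed

lemma distrib:
  assumes I: "submodule R I" and J: "submodule R J" and K: "submodule R K"
  shows "idl_mult (idl_sum I J) K = idl_sum (idl_mult I K) (idl_mult J K)"
proof
  have S: "submodule R (idl_sum (idl_mult I K) (idl_mult J K))" using sub_sum sub_mult I J K by blast
  show "idl_mult (idl_sum I J) K \<subseteq> idl_sum (idl_mult I K) (idl_mult J K)"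
  proof (rule mult_least)
    show "0 \<in> idl_sum (idl_mult I K) (idl_mult J K)" using S by (rule sub_0)
    show "\<And>x y. x \<in> idl_sum (idl_mult I K) (idl_mult J K) \<Longrightarrow> y \<in> idl_sum (idl_mult I K) (idl_mult J K) \<Longrightarrow> x + y \<in> idl_sum (idl_mult I K) (idl_mult J K)"
      using S by (rule sub_add)
    fix u c assume "u \<in> idl_sum I J" "c \<in> K"
    then obtain a b where "u = a + b" "a \<in> I" "b \<in> J" unfolding idl_sum_iff by blast
    then have "u * c = a * c + b * c" "a * c \<in> idl_mult I K" "b * c \<in> idl_mult J K"
      using \<open>c \<in> K\<close> mult_in by (auto simp: algebra_simps)
    then show "u * c \<in> idl_sum (idl_mult I K) (idl_mult J K)" unfolding idl_sum_iff by blast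
  qed
  have "0 \<in> I" "0 \<in> J" using I J by (auto intro: sub_0)
  then have "idl_mult I K \<subseteq> idl_mult (idl_sum I J) K" "idl_mult J K \<subseteq> idl_mult (idl_sum I J) K"
    using mult_mono[OF sum_upper1[of J I] order_refl] mult_mono[OF sum_upper2[of I J] order_refl] by auto
  then show "idl_sum (idl_mult I K) (idl_mult J K) \<subseteq> idl_mult (idl_sum I J) K"
    by (rule sum_least) (rule mult_add)
qed

abbreviation iv :: "'a set \<Rightarrow> 'a set" where "iv I \<equiv> colon R R I"

lemma colon_iff: "x \<in> colon R I J \<longleftrightarrow> x \<in> frac_field R \<and> (\<forall>y\<in>J. x * y \<in> I)"
  unfolding colon_def by blast

lemma one_mult_repr:
  assumes "idl_mult I J = R"
  obtains n :: nat and f g where "1 = (\<Sum>i<n. f i * g i)" "\<forall>i<n. f i \<in> I \<and> g i \<in> J"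
proof -
  have "1 \<in> idl_mult I J" using assms R1 by simp
  then show thesis using that unfolding idl_mult_iff by blast
qed

lemma inv_unique:
  assumes I: "submodule R I" and J: "submodule R J" and IJ: "idl_mult I J = R"
  shows "iv I = J"
proof
  show "J \<subseteq> iv I"
  proof
    fix y assume y: "y \<in> J"
    have "y \<in> frac_field R" using y J sub_frac by blast
    moreover have "y * x \<in> R" if "x \<in> I" for x
      using mult_in[OF that y] IJ by (simp add: mult.commute)
    ultimately show "y \<in> iv I" unfolding colon_iff by blast
  qed
  show "iv I \<subseteq> J"
  proof
    fix z assume z: "z \<in> iv I"
    obtain n :: nat and f g where 1: "1 = (\<Sum>i<n. f i * g i)" "\<forall>i<n. f i \<in> I \<and> g i \<in> J"
      by (rule one_mult_repr[OF IJ])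
    have "z = z * (\<Sum>i<n. f i * g i)" unfolding 1(1)[symmetric] by simp
    also have "\<dots> = (\<Sum>i<n. (z * f i) * g i)" by (simp add: sum_distrib_left mult.assoc)
    finally have "z = (\<Sum>i<n. (z * f i) * g i)" .
    also have "\<dots> \<in> J"
    proof (rule sub_sum_closed[OF J])
      fix i assume "i < n"
      then have "z * f i \<in> R" "g i \<in> J" using 1(2) z unfolding colon_iff by auto
      then show "z * f i * g i \<in> J" using sub_scal[OF J] by blast
    qed
    finally show "z \<in> J" .
  qed
qed

lemma inv_props:
  assumes "invertible R I"
  shows "submodule R (iv I)" "idl_mult I (iv I) = R" "idl_mult (iv I) I = R"
    "invertible R (iv I)" "iv (iv I) = I" "submodule R I"
proof -
  obtain J where J: "submodule R J" "idl_mult I J = R" and I: "submodule R I"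
    using assms unfolding invertible_def by blast
  have e: "iv I = J" using inv_unique[OF I J] .
  have JI: "idl_mult J I = R" using J(2) mult_comm[of J I] by simp
  show s1: "submodule R (iv I)" using e J(1) by simp
  show "idl_mult I (iv I) = R" using e J(2) by simp
  show "idl_mult (iv I) I = R" using e JI by simp
  show "submodule R I" by (rule I)
  show "invertible R (iv I)" unfolding invertible_def
    by (rule conjI[OF s1], rule exI[of _ I]) (use I e JI in simp)
  show "iv (iv I) = I" using inv_unique[OF J(1) I JI] e by simp
qed

lemma colon_eq:
  assumes I: "submodule R I" and J: "invertible R J"
  shows "colon R I J = idl_mult I (iv J)"
proof
  have J': "submodule R J" "submodule R (iv J)" "idl_mult J (iv J) = R" using inv_props[OF J] by auto
  have I0: "0 \<in> I" and Iadd: "\<And>x y. x \<in> I \<Longrightarrow> y \<in> I \<Longrightarrow> x + y \<in> I"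
    and Iscal: "\<And>r x. r \<in> R \<Longrightarrow> x \<in> I \<Longrightarrow> r * x \<in> I" and Ifr: "I \<subseteq> frac_field R"
    using sub_0[OF I] sub_add[OF I] sub_scal[OF I] sub_frac[OF I] by auto
  have ivfr: "iv J \<subseteq> frac_field R" unfolding colon_def by blast
  show "idl_mult I (iv J) \<subseteq> colon R I J"
  proof (rule mult_least)
    show "0 \<in> colon R I J" unfolding colon_iff using frac0 I0 by simp
    show "x + y \<in> colon R I J" if xy: "x \<in> colon R I J" "y \<in> colon R I J" for x y
    proof -
      have "x \<in> frac_field R" "y \<in> frac_field R" "\<forall>u\<in>J. x * u \<in> I" "\<forall>u\<in>J. y * u \<in> I"
        using xy unfolding colon_iff by auto
      then show ?thesis unfolding colon_iff using frac_add Iadd by (metis distrib_right)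
    qed
    fix a b assume a: "a \<in> I" and b: "b \<in> iv J"
    have "a * b \<in> frac_field R" using a b Ifr ivfr frac_mult by blast
    moreover have "a * b * y \<in> I" if y: "y \<in> J" for y
    proof -
      have "b * y \<in> R" using b y unfolding colon_iff by blast
      then have "(b * y) * a \<in> I" using Iscal a by blast
      then show ?thesis by (simp add: algebra_simps)
    qed
    ultimately show "a * b \<in> colon R I J" unfolding colon_iff by blast
  qed
  show "colon R I J \<subseteq> idl_mult I (iv J)"
  proof
    fix z assume z: "z \<in> colon R I J"
    obtain n :: nat and f g where 1: "1 = (\<Sum>i<n. f i * g i)" "\<forall>i<n. f i \<in> J \<and> g i \<in> iv J"
      by (rule one_mult_repr[OF J'(3)])
    have "z = z * (\<Sum>i<n. f i * g i)" unfolding 1(1)[symmetric] by simp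
    also have "\<dots> = (\<Sum>i<n. (z * f i) * g i)" by (simp add: sum_distrib_left mult.assoc)
    finally have zs: "z = (\<Sum>i<n. (z * f i) * g i)" .
    have zJ: "\<forall>u\<in>J. z * u \<in> I" using z unfolding colon_iff by blast
    have "\<forall>i<n. z * f i \<in> I \<and> g i \<in> iv J" using 1(2) zJ by blast
    then show "z \<in> idl_mult I (iv J)" unfolding idl_mult_iff
      by (intro exI[of _ n] exI[of _ "\<lambda>i. z * f i"] exI[of _ g]) (use zs in simp)
  qed
qed

lemma colon_sub: "submodule R I \<Longrightarrow> invertible R J \<Longrightarrow> submodule R (colon R I J)"
  using colon_eq sub_mult inv_props(1) by simp

lemma inv_R: "invertible R R" "iv R = R"
proof -
  show "invertible R R" unfolding invertible_def using sub_R mult_R by blast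
  then show "iv R = R" using inv_unique[OF sub_R sub_R] mult_R[OF sub_R] by blast
qed

lemma mult_inv:
  assumes I: "invertible R I" and J: "invertible R J"
  shows "invertible R (idl_mult I J)" "iv (idl_mult I J) = idl_mult (iv I) (iv J)"
proof -
  note i = inv_props[OF I] and j = inv_props[OF J]
  have "idl_mult J (idl_mult (iv I) (iv J)) = idl_mult J (idl_mult (iv J) (iv I))"
    by (simp add: mult_comm[of "iv I"])
  also have "\<dots> = idl_mult (idl_mult J (iv J)) (iv I)"
    using mult_assoc[OF j(6) j(1) i(1)] by simp
  also have "\<dots> = iv I" using j(2) mult_R[OF i(1)] by simp
  finally have e1: "idl_mult J (idl_mult (iv I) (iv J)) = iv I" .
  have "idl_mult (idl_mult I J) (idl_mult (iv I) (iv J)) = idl_mult I (idl_mult J (idl_mult (iv I) (iv J)))"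
    using mult_assoc[OF i(6) j(6) sub_mult[OF i(1) j(1)]] .
  also have "\<dots> = R" using e1 i(2) by simp
  finally have e: "idl_mult (idl_mult I J) (idl_mult (iv I) (iv J)) = R" .
  have s: "submodule R (idl_mult I J)" "submodule R (idl_mult (iv I) (iv J))" using i j sub_mult by auto
  show "invertible R (idl_mult I J)" unfolding invertible_def using e s by blast
  show "iv (idl_mult I J) = idl_mult (iv I) (iv J)" using inv_unique[OF s e] .
qed

lemma cancel_le:
  assumes b: "invertible R b" and I: "submodule R I" and J: "submodule R J"
    and le: "idl_mult b I \<subseteq> idl_mult b J"
  shows "I \<subseteq> J"
proof -
  note bb = inv_props[OF b]
  have "idl_mult (iv b) (idl_mult b I) \<subseteq> idl_mult (iv b) (idl_mult b J)" using le mult_mono by blast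
  moreover have "idl_mult (iv b) (idl_mult b K) = K" if K: "submodule R K" for K
  proof -
    have "idl_mult (iv b) (idl_mult b K) = idl_mult (idl_mult (iv b) b) K"
      using mult_assoc[OF bb(1) bb(6) K] by simp
    then show ?thesis using bb(3) mult_R[OF K] by simp
  qed
  ultimately show ?thesis using I J by simp
qed

lemma cancel_eq:
  assumes b: "invertible R b" and I: "submodule R I" and J: "submodule R J"
    and e: "idl_mult b I = idl_mult b J"
  shows "I = J"
  using cancel_le[OF b I J] cancel_le[OF b J I] e by blast

lemma R_ne0: "R \<noteq> {0}" using R1 by auto

lemma inv_nonzero: "invertible R I \<Longrightarrow> I \<noteq> {0}"
proof
  assume "invertible R I" "I = {0}"
  then obtain J where "idl_mult {0} J = R" unfolding invertible_def by blast
  moreover have "idl_mult {0} J \<subseteq> {0}" by (rule mult_least) auto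
  ultimately show False using R_ne0 R0 by blast
qed

end


inductive_set bmono :: "'a::field set \<Rightarrow> 'a set set \<Rightarrow> 'a set set"
  for R :: "'a set" and B :: "'a set set" where
  mR: "R \<in> bmono R B"
| mS: "b \<in> B \<Longrightarrow> I \<in> bmono R B \<Longrightarrow> idl_mult b I \<in> bmono R B"

context rctx begin

lemma ideal_sub: "ideal_of R I \<Longrightarrow> submodule R I" unfolding ideal_of_def by blast
lemma ideal_subR: "ideal_of R I \<Longrightarrow> I \<subseteq> R" unfolding ideal_of_def by blast
lemma ideal_of_I: "submodule R I \<Longrightarrow> I \<subseteq> R \<Longrightarrow> ideal_of R I" unfolding ideal_of_def by blast

lemma swap4:
  assumes "submodule R A" "submodule R B" "submodule R C" "submodule R D"
  shows "idl_mult (idl_mult A B) (idl_mult C D) = idl_mult (idl_mult A C) (idl_mult B D)"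
proof -
  have "idl_mult (idl_mult A B) (idl_mult C D) = idl_mult A (idl_mult B (idl_mult C D))"
    using mult_assoc[OF assms(1,2) sub_mult[OF assms(3,4)]] .
  also have "idl_mult B (idl_mult C D) = idl_mult C (idl_mult B D)"
  proof -
    have "idl_mult B (idl_mult C D) = idl_mult (idl_mult B C) D" using mult_assoc[OF assms(2,3,4)] by simp
    also have "\<dots> = idl_mult (idl_mult C B) D" by (simp add: mult_comm[of B C])
    also have "\<dots> = idl_mult C (idl_mult B D)" using mult_assoc[OF assms(3,2,4)] by simp
    finally show ?thesis .
  qed
  also have "idl_mult A (idl_mult C (idl_mult B D)) = idl_mult (idl_mult A C) (idl_mult B D)"
    using mult_assoc[OF assms(1,3) sub_mult[OF assms(2,4)]] by simp
  finally show ?thesis .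
qed

lemma swap3:
  assumes "submodule R A" "submodule R B" "submodule R C"
  shows "idl_mult A (idl_mult B C) = idl_mult B (idl_mult A C)"
proof -
  have "idl_mult A (idl_mult B C) = idl_mult (idl_mult A B) C" using mult_assoc[OF assms] by simp
  also have "\<dots> = idl_mult (idl_mult B A) C" by (simp add: mult_comm[of A B])
  also have "\<dots> = idl_mult B (idl_mult A C)" using mult_assoc[OF assms(2,1,3)] by simp
  finally show ?thesis .
qed

lemma sum_mono: "I \<subseteq> I' \<Longrightarrow> J \<subseteq> J' \<Longrightarrow> idl_sum I J \<subseteq> idl_sum I' J'"
  unfolding idl_sum_def by blast

lemma sum_R: assumes "ideal_of R J" shows "idl_sum R J = R"
proof
  show "idl_sum R J \<subseteq> R" by (rule sum_least) (use ideal_subR[OF assms] Radd in auto)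
  show "R \<subseteq> idl_sum R J" by (rule sum_upper1) (rule sub_0[OF ideal_sub[OF assms]])
qed

lemma mult_le_R: assumes "submodule R A" "B \<subseteq> R" shows "idl_mult A B \<subseteq> A"
proof -
  have "idl_mult A B \<subseteq> idl_mult A R" by (rule mult_mono) (use assms in auto)
  then show ?thesis using mult_R2[OF assms(1)] by simp
qed

lemma mult_le_L: assumes "submodule R A" "B \<subseteq> R" shows "idl_mult B A \<subseteq> A"
  using mult_le_R[OF assms] mult_comm[of A B] by simp

end

locale cbasis = rctx R for R :: "'a::field set" +
  fixes B :: "'a set set"
  assumes B_ideal: "b \<in> B \<Longrightarrow> ideal_of R b"
    and B_inv: "b \<in> B \<Longrightarrow> invertible R b"
    and B_neR: "b \<in> B \<Longrightarrow> b \<noteq> R"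
    and B_cop: "b \<in> B \<Longrightarrow> c \<in> B \<Longrightarrow> b \<noteq> c \<Longrightarrow> idl_sum b c = R"
begin

abbreviation "MB \<equiv> bmono R B"

lemma mono_props: "I \<in> MB \<Longrightarrow> ideal_of R I \<and> invertible R I"
proof (induction rule: bmono.induct)
  case mR then show ?case using ideal_R inv_R by simp
next
  case (mS b I)
  then show ?case using ideal_mult[OF B_ideal[OF mS(1)]] mult_inv(1)[OF B_inv[OF mS(1)]] by simp
qed

lemma mono_ideal: "I \<in> MB \<Longrightarrow> ideal_of R I" using mono_props by blast
lemma mono_inv: "I \<in> MB \<Longrightarrow> invertible R I" using mono_props by blast
lemma mono_sub: "I \<in> MB \<Longrightarrow> submodule R I" using mono_ideal ideal_sub by blast
lemma mono_subR: "I \<in> MB \<Longrightarrow> I \<subseteq> R" using mono_ideal ideal_subR by blast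
lemma B_sub: "b \<in> B \<Longrightarrow> submodule R b" using B_ideal ideal_sub by blast
lemma B_subR: "b \<in> B \<Longrightarrow> b \<subseteq> R" using B_ideal ideal_subR by blast

lemma mono_mult: "I \<in> MB \<Longrightarrow> J \<in> MB \<Longrightarrow> idl_mult I J \<in> MB"
proof (induction rule: bmono.induct)
  case mR then show ?case using mult_R[OF mono_sub[OF mR]] by simp
next
  case (mS b I)
  have "idl_mult (idl_mult b I) J = idl_mult b (idl_mult I J)"
    using mult_assoc[OF B_sub[OF mS(1)] mono_sub[OF mS(2)] mono_sub[OF mS(4)]] .
  then show ?case using bmono.mS[OF mS(1) mS(3)[OF mS(4)]] by simp
qed

lemma mono_B: assumes "b \<in> B" shows "b \<in> MB"
proof -
  have "idl_mult b R \<in> MB" by (rule bmono.mS[OF assms bmono.mR])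
  then show ?thesis using mult_R2[OF B_sub[OF assms]] by simp
qed

lemma dich: "J \<in> MB \<Longrightarrow> b \<in> B \<Longrightarrow> J \<subseteq> b \<or> idl_sum b J = R"
proof (induction J rule: bmono.induct)
  case mR
  have "idl_sum b R = R" using sum_R[OF B_ideal[OF mR]] sum_comm by metis
  then show ?case by blast
next
  case (mS c J)
  show ?case
  proof (cases "c = b")
    case True
    then have "idl_mult c J \<subseteq> c" using mult_le_R[OF B_sub[OF mS(1)] mono_subR[OF mS(2)]] by simp
    then show ?thesis using True by blast
  next
    case False
    from mS(3)[OF mS(4)] show ?thesis
    proof
      assume "J \<subseteq> b"
      then have "idl_mult c J \<subseteq> J" using mult_le_L[OF mono_sub[OF mS(2)] B_subR[OF mS(1)]] by simp
      then show ?thesis using \<open>J \<subseteq> b\<close> by blast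
    next
      assume "idl_sum b J = R"
      moreover have "idl_sum b c = R" using B_cop[OF mS(4) mS(1)] False by simp
      ultimately have "idl_sum b (idl_mult c J) = R"
        using coprime_mult[OF B_ideal[OF mS(4)] B_ideal[OF mS(1)] mono_ideal[OF mS(2)]] by simp
      then show ?thesis by blast
    qed
  qed
qed

lemma divB: "I \<in> MB \<Longrightarrow> b \<in> B \<Longrightarrow> I \<subseteq> b \<Longrightarrow> \<exists>K\<in>MB. I = idl_mult b K"
proof (induction I rule: bmono.induct)
  case mR
  then have "b = R" using B_subR[OF mR(1)] by blast
  then show ?case using B_neR[OF mR(1)] by blast
next
  case (mS c I)
  show ?case
  proof (cases "c = b")
    case True then show ?thesis using mS(2) by blast
  next
    case False
    have bs: "submodule R b" "b \<subseteq> R" using B_sub B_subR mS(4) by auto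
    have cs: "submodule R c" "c \<subseteq> R" using B_sub B_subR mS(1) by auto
    have Is: "submodule R I" "I \<subseteq> R" using mono_sub mono_subR mS(2) by auto
    have "I = idl_mult R I" using mult_R[OF Is(1)] by simp
    also have "\<dots> = idl_mult (idl_sum b c) I" using B_cop[OF mS(4) mS(1)] False by simp
    also have "\<dots> = idl_sum (idl_mult b I) (idl_mult c I)" by (rule distrib[OF bs(1) cs(1) Is(1)])
    also have "\<dots> \<subseteq> b"
    proof (rule sum_least)
      show "idl_mult b I \<subseteq> b" by (rule mult_le_R[OF bs(1) Is(2)])
      show "idl_mult c I \<subseteq> b" by (rule mS(5))
      show "x + y \<in> b" if "x \<in> b" "y \<in> b" for x y using sub_add[OF bs(1)] that by blast
    qed
    finally have "I \<subseteq> b" .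
    then obtain K where K: "K \<in> MB" "I = idl_mult b K" using mS(3)[OF mS(4)] by blast
    have "idl_mult c I = idl_mult b (idl_mult c K)"
      using K(2) swap3[OF cs(1) bs(1) mono_sub[OF K(1)]] by simp
    moreover have "idl_mult c K \<in> MB" by (rule bmono.mS[OF mS(1) K(1)])
    ultimately show ?thesis by blast
  qed
qed

lemma key: "J \<in> MB \<Longrightarrow> I \<in> MB \<Longrightarrow> I \<subseteq> J \<Longrightarrow> \<exists>K\<in>MB. I = idl_mult J K"
proof (induction J arbitrary: I rule: bmono.induct)
  case mR then show ?case using mult_R[OF mono_sub[OF mR(1)]] by auto
next
  case (mS b J I)
  have "idl_mult b J \<subseteq> b" using mult_le_R[OF B_sub[OF mS(1)] mono_subR[OF mS(2)]] .
  then have "I \<subseteq> b" using mS(5) by blast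
  then obtain I2 where I2: "I2 \<in> MB" "I = idl_mult b I2" using divB[OF mS(4) mS(1)] by blast
  have "I2 \<subseteq> J" using cancel_le[OF B_inv[OF mS(1)] mono_sub[OF I2(1)] mono_sub[OF mS(2)]] mS(5) I2(2) by simp
  then obtain K where K: "K \<in> MB" "I2 = idl_mult J K" using mS(3)[OF I2(1)] by blast
  have "I = idl_mult (idl_mult b J) K"
    using I2(2) K(2) mult_assoc[OF B_sub[OF mS(1)] mono_sub[OF mS(2)] mono_sub[OF K(1)]] by simp
  then show ?case using K(1) by blast
qed

lemma mono_sum: "I \<in> MB \<Longrightarrow> J \<in> MB \<Longrightarrow> idl_sum I J \<in> MB"
proof (induction I arbitrary: J rule: bmono.induct)
  case mR then show ?case using sum_R[OF mono_ideal[OF mR(1)]] bmono.mR by simp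
next
  case (mS b I J)
  have bs: "submodule R b" "b \<subseteq> R" using B_sub B_subR mS(1) by auto
  have Is: "submodule R I" "I \<subseteq> R" using mono_sub mono_subR mS(2) by auto
  have Js: "submodule R J" "J \<subseteq> R" using mono_sub mono_subR mS(4) by auto
  from dich[OF mS(4) mS(1)] show ?case
  proof
    assume "J \<subseteq> b"
    then obtain J2 where J2: "J2 \<in> MB" "J = idl_mult b J2" using divB[OF mS(4) mS(1)] by blast
    have "idl_sum (idl_mult b I) (idl_mult b J2) = idl_mult (idl_sum I J2) b"
      using distrib[OF Is(1) mono_sub[OF J2(1)] bs(1)] mult_comm[of b I] mult_comm[of b J2] by simp
    also have "\<dots> = idl_mult b (idl_sum I J2)" by (simp add: mult_comm)
    finally have "idl_sum (idl_mult b I) J = idl_mult b (idl_sum I J2)" using J2(2) by simp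
    then show ?case using bmono.mS[OF mS(1) mS(3)[OF J2(1)]] by simp
  next
    assume cop: "idl_sum b J = R"
    have "idl_sum (idl_mult b I) J = idl_sum I J"
    proof
      show "idl_sum (idl_mult b I) J \<subseteq> idl_sum I J"
        by (rule sum_mono[OF mult_le_L[OF Is(1) bs(2)] order_refl])
      have "I = idl_mult (idl_sum b J) I" using cop mult_R[OF Is(1)] by simp
      also have "\<dots> = idl_sum (idl_mult b I) (idl_mult J I)" by (rule distrib[OF bs(1) Js(1) Is(1)])
      also have "\<dots> \<subseteq> idl_sum (idl_mult b I) J" by (rule sum_mono[OF order_refl mult_le_R[OF Js(1) Is(2)]])
      finally have "I \<subseteq> idl_sum (idl_mult b I) J" .
      moreover have "J \<subseteq> idl_sum (idl_mult b I) J" by (rule sum_upper2) (rule mult_zero)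
      moreover have "submodule R (idl_sum (idl_mult b I) J)" by (rule sub_sum[OF sub_mult[OF bs(1) Is(1)] Js(1)])
      ultimately show "idl_sum I J \<subseteq> idl_sum (idl_mult b I) J"
        using sum_least sub_add by metis
    qed
    then show ?case using mS(3)[OF mS(4)] by simp
  qed
qed

end


context cbasis begin

abbreviation "GB \<equiv> gen_subgroup R B"

lemma mono_G: "I \<in> MB \<Longrightarrow> I \<in> GB"
proof (induction rule: bmono.induct)
  case mR then show ?case by (rule gen_subgroup.one)
next
  case (mS b I) then show ?case using gen_subgroup.mult[OF gen_subgroup.gen[OF mS(1)] mS(3)] by simp
qed

lemma mono_ivG: "I \<in> MB \<Longrightarrow> iv I \<in> GB"
proof (induction rule: bmono.induct)
  case mR then show ?case using inv_R(2) gen_subgroup.one by simp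
next
  case (mS b I)
  have "iv (idl_mult b I) = idl_mult (iv b) (iv I)" by (rule mult_inv(2)[OF B_inv[OF mS(1)] mono_inv[OF mS(2)]])
  then show ?case using gen_subgroup.mult[OF gen_subgroup.inv[OF mS(1)] mS(3)] by simp
qed

lemma G_repr: "g \<in> GB \<Longrightarrow> \<exists>P\<in>MB. \<exists>Q\<in>MB. g = idl_mult P (iv Q)"
proof (induction rule: gen_subgroup.induct)
  case one
  have "R = idl_mult R (iv R)" using inv_R(2) mult_R[OF sub_R] by simp
  then show ?case using bmono.mR by blast
next
  case (gen I)
  have "I = idl_mult I (iv R)" using inv_R(2) mult_R2[OF B_sub[OF gen]] by simp
  then show ?case using bmono.mR mono_B[OF gen] by blast
next
  case (inv I)
  have "iv I = idl_mult R (iv I)" using mult_R[OF inv_props(1)[OF B_inv[OF inv]]] by simp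
  then show ?case using bmono.mR mono_B[OF inv] by blast
next
  case (mult I J)
  obtain P1 Q1 where 1: "P1 \<in> MB" "Q1 \<in> MB" "I = idl_mult P1 (iv Q1)" using mult(3) by blast
  obtain P2 Q2 where 2: "P2 \<in> MB" "Q2 \<in> MB" "J = idl_mult P2 (iv Q2)" using mult(4) by blast
  have "idl_mult I J = idl_mult (idl_mult P1 P2) (idl_mult (iv Q1) (iv Q2))"
    using 1(3) 2(3) swap4[OF mono_sub[OF 1(1)] inv_props(1)[OF mono_inv[OF 1(2)]] mono_sub[OF 2(1)] inv_props(1)[OF mono_inv[OF 2(2)]]]
    by simp
  also have "\<dots> = idl_mult (idl_mult P1 P2) (iv (idl_mult Q1 Q2))"
    using mult_inv(2)[OF mono_inv[OF 1(2)] mono_inv[OF 2(2)]] by simp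
  finally show ?case using mono_mult[OF 1(1) 2(1)] mono_mult[OF 1(2) 2(2)] by blast
qed

lemma G_inv: assumes "g \<in> GB" shows "iv g \<in> GB"
proof -
  obtain P Q where PQ: "P \<in> MB" "Q \<in> MB" "g = idl_mult P (iv Q)" using G_repr[OF assms] by blast
  have "iv g = idl_mult (iv P) (iv (iv Q))"
    using PQ(3) mult_inv(2)[OF mono_inv[OF PQ(1)] inv_props(4)[OF mono_inv[OF PQ(2)]]] by simp
  also have "\<dots> = idl_mult (iv P) Q" using inv_props(5)[OF mono_inv[OF PQ(2)]] by simp
  finally show ?thesis using gen_subgroup.mult[OF mono_ivG[OF PQ(1)] mono_G[OF PQ(2)]] by simp
qed

lemma frac_int:
  assumes P: "P \<in> MB" and Q: "Q \<in> MB" and le: "idl_mult P (iv Q) \<subseteq> R"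
  shows "idl_mult P (iv Q) \<in> MB"
proof -
  let ?g = "idl_mult P (iv Q)"
  note Qi = inv_props[OF mono_inv[OF Q]]
  have gs: "submodule R ?g" using sub_mult[OF mono_sub[OF P] Qi(1)] .
  have "idl_mult ?g Q = idl_mult P (idl_mult (iv Q) Q)" using mult_assoc[OF mono_sub[OF P] Qi(1) Qi(6)] .
  also have "\<dots> = P" using Qi(3) mult_R2[OF mono_sub[OF P]] by simp
  finally have gQ: "idl_mult ?g Q = P" .
  have "idl_mult ?g Q \<subseteq> Q" by (rule mult_le_L[OF Qi(6) le])
  then have "P \<subseteq> Q" using gQ by simp
  then obtain K where K: "K \<in> MB" "P = idl_mult Q K" using key[OF Q P] by blast
  have "?g = idl_mult (idl_mult K Q) (iv Q)" using K(2) mult_comm[of Q K] by simp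
  also have "\<dots> = idl_mult K (idl_mult Q (iv Q))" using mult_assoc[OF mono_sub[OF K(1)] Qi(6) Qi(1)] .
  also have "\<dots> = K" using Qi(2) mult_R2[OF mono_sub[OF K(1)]] by simp
  finally show ?thesis using K(1) by simp
qed

lemma G_int: assumes "g \<in> GB" "g \<subseteq> R" shows "g \<in> MB"
proof -
  obtain P Q where PQ: "P \<in> MB" "Q \<in> MB" "g = idl_mult P (iv Q)" using G_repr[OF assms(1)] by blast
  show ?thesis using frac_int[OF PQ(1,2)] PQ(3) assms(2) by simp
qed

lemma closure_MB:
  assumes XG: "X \<subseteq> GB" and XR: "\<And>I. I \<in> X \<Longrightarrow> I \<subseteq> R"
  shows "I \<in> ideal_closure R X \<Longrightarrow> I \<in> MB"
proof (induction rule: ideal_closure.induct)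
  case base_R then show ?case by (rule bmono.mR)
next
  case (base_X I) then show ?case using G_int XG XR by blast
next
  case (add I J) show ?case by (rule mono_sum[OF add(3) add(4)])
next
  case (mult I J) show ?case by (rule mono_mult[OF mult(3) mult(4)])
next
  case (div I J)
  have "colon R I J = idl_mult I (iv J)" by (rule colon_eq[OF mono_sub[OF div(7)] div(5)])
  then show ?case using frac_int[OF div(7) div(8)] div(6) by simp
qed

end


context rctx begin

lemma closure_ideal:
  assumes XI: "\<And>I. I \<in> X \<Longrightarrow> ideal_of R I"
  shows "I \<in> ideal_closure R X \<Longrightarrow> ideal_of R I"
proof (induction rule: ideal_closure.induct)
  case base_R then show ?case by (rule ideal_R)
next
  case (base_X I) then show ?case by (rule XI)
next
  case (add I J) show ?case by (rule ideal_sum[OF add(3) add(4)])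
next
  case (mult I J) show ?case by (rule ideal_mult[OF mult(3) mult(4)])
next
  case (div I J)
  show ?case by (rule ideal_of_I[OF colon_sub[OF ideal_sub[OF div(3)] div(5)] div(6)])
qed

end

locale octx = rctx R for R :: "'a::field set" +
  fixes X :: "'a set set"
  assumes X_ideal: "\<And>I. I \<in> X \<Longrightarrow> ideal_of R I"
    and C_inv: "\<And>I. I \<in> ideal_closure R X \<Longrightarrow> invertible R I"
    and fin: "\<And>I. ideal_of R I \<Longrightarrow> I \<noteq> {0} \<Longrightarrow> finite {J. ideal_of R J \<and> I \<subseteq> J}"
begin

abbreviation "CX \<equiv> ideal_closure R X"
definition "SX = {I \<in> CX. card {J \<in> CX. I \<subseteq> J} = 2}"

lemma C_ideal: "I \<in> CX \<Longrightarrow> ideal_of R I" using closure_ideal X_ideal by blast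

lemma S_char: "I \<in> SX \<longleftrightarrow> I \<in> CX \<and> I \<noteq> R \<and> (\<forall>J\<in>CX. I \<subseteq> J \<longrightarrow> J = I \<or> J = R)"
proof
  assume "I \<in> SX"
  then have IC: "I \<in> CX" and c: "card {J \<in> CX. I \<subseteq> J} = 2" unfolding SX_def by auto
  obtain x y where xy: "{J \<in> CX. I \<subseteq> J} = {x, y}" "x \<noteq> y" using c unfolding card_2_iff by blast
  have IR: "I \<subseteq> R" using C_ideal[OF IC] ideal_subR by blast
  have "I \<in> {x, y}" "R \<in> {x, y}" using xy(1)[symmetric] IC IR ideal_closure.base_R by blast+
  have "I \<noteq> R"
  proof
    assume "I = R"
    have "x = R" "y = R"
    proof -
      have "x \<in> CX" "I \<subseteq> x" "y \<in> CX" "I \<subseteq> y" using xy(1) by blast+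
      then show "x = R" "y = R" using \<open>I = R\<close> C_ideal ideal_subR by blast+
    qed
    then show False using xy(2) by simp
  qed
  moreover have "\<forall>J\<in>CX. I \<subseteq> J \<longrightarrow> J = I \<or> J = R"
  proof (intro ballI impI)
    fix J assume "J \<in> CX" "I \<subseteq> J"
    then have "J \<in> {x, y}" using xy(1) by blast
    then show "J = I \<or> J = R" using \<open>I \<in> {x, y}\<close> \<open>R \<in> {x, y}\<close> \<open>I \<noteq> R\<close> by blast
  qed
  ultimately show "I \<in> CX \<and> I \<noteq> R \<and> (\<forall>J\<in>CX. I \<subseteq> J \<longrightarrow> J = I \<or> J = R)" using IC by blast
next
  assume a: "I \<in> CX \<and> I \<noteq> R \<and> (\<forall>J\<in>CX. I \<subseteq> J \<longrightarrow> J = I \<or> J = R)"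
  have IR: "I \<subseteq> R" using C_ideal a ideal_subR by blast
  have "{J \<in> CX. I \<subseteq> J} = {I, R}" using a IR ideal_closure.base_R by blast
  then have "card {J \<in> CX. I \<subseteq> J} = 2" using a by (simp add: card_2_iff)
  then show "I \<in> SX" unfolding SX_def using a by blast
qed

lemma S_cop:
  assumes P: "P \<in> SX" and Q: "Q \<in> SX" and ne: "P \<noteq> Q"
  shows "idl_sum P Q = R"
proof -
  have PC: "P \<in> CX" "P \<noteq> R" "\<forall>J\<in>CX. P \<subseteq> J \<longrightarrow> J = P \<or> J = R" using P unfolding S_char by blast+
  have QC: "Q \<in> CX" "Q \<noteq> R" "\<forall>J\<in>CX. Q \<subseteq> J \<longrightarrow> J = Q \<or> J = R" using Q unfolding S_char by blast+
  have sC: "idl_sum P Q \<in> CX" by (rule ideal_closure.add[OF PC(1) QC(1)])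
  have s0: "0 \<in> P" "0 \<in> Q" using C_ideal PC(1) QC(1) ideal_sub sub_0 by blast+
  have "P \<subseteq> idl_sum P Q" by (rule sum_upper1[OF s0(2)])
  then have "idl_sum P Q = P \<or> idl_sum P Q = R" using PC(3) sC by blast
  moreover have "Q \<subseteq> idl_sum P Q" by (rule sum_upper2[OF s0(1)])
  ultimately show ?thesis
  proof (elim disjE)
    assume "idl_sum P Q = P" "Q \<subseteq> idl_sum P Q"
    then have "Q \<subseteq> P" by simp
    then have "P = Q \<or> P = R" using QC(3) PC(1) by blast
    then show ?thesis using ne PC(2) by blast
  qed simp
qed

lemma decomp_aux:
  "\<forall>I. I \<in> CX \<longrightarrow> card {J. ideal_of R J \<and> I \<subseteq> J} = n \<longrightarrow> I \<in> gen_subgroup R SX"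
proof (induction n rule: less_induct)
  case (less n)
  show ?case
  proof (intro allI impI)
    fix I assume IC: "I \<in> CX" and cn: "card {J. ideal_of R J \<and> I \<subseteq> J} = n"
    show "I \<in> gen_subgroup R SX"
    proof (cases "I = R")
      case True then show ?thesis using gen_subgroup.one by simp
    next
      case False
      have Ii: "ideal_of R I" using C_ideal[OF IC] .
      have Iinv: "invertible R I" using C_inv[OF IC] .
      have finI: "finite {J. ideal_of R J \<and> I \<subseteq> J}" using fin[OF Ii inv_nonzero[OF Iinv]] .
      define T where "T = {J \<in> CX. I \<subseteq> J \<and> J \<noteq> R}"
      have "T \<subseteq> {J. ideal_of R J \<and> I \<subseteq> J}" unfolding T_def using C_ideal by blast
      then have finT: "finite T" using finI finite_subset by blast
      have IT: "I \<in> T" unfolding T_def using IC False by blast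
      obtain P where P: "P \<in> T" "I \<subseteq> P" "\<forall>Q\<in>T. P \<subseteq> Q \<longrightarrow> P = Q"
        using finite_has_maximal2[OF finT IT] by blast
      have PC: "P \<in> CX" "P \<noteq> R" using P(1) unfolding T_def by blast+
      have "\<forall>J\<in>CX. P \<subseteq> J \<longrightarrow> J = P \<or> J = R"
      proof (intro ballI impI)
        fix J assume "J \<in> CX" "P \<subseteq> J"
        show "J = P \<or> J = R"
        proof (cases "J = R")
          case False
          then have "J \<in> T" unfolding T_def using \<open>J \<in> CX\<close> \<open>P \<subseteq> J\<close> P(2) by blast
          then show ?thesis using P(3) \<open>P \<subseteq> J\<close> by blast
        qed simp
      qed
      then have PS: "P \<in> SX" unfolding S_char using PC by blast
      have Pi: "ideal_of R P" using C_ideal[OF PC(1)] .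
      have Pinv: "invertible R P" using C_inv[OF PC(1)] .
      note Pp = inv_props[OF Pinv]
      define I' where "I' = colon R I P"
      have I'eq: "I' = idl_mult I (iv P)" unfolding I'_def by (rule colon_eq[OF ideal_sub[OF Ii] Pinv])
      have "idl_mult I (iv P) \<subseteq> idl_mult P (iv P)" by (rule mult_mono[OF P(2) order_refl])
      then have I'R: "I' \<subseteq> R" using I'eq Pp(2) by simp
      have I'C: "I' \<in> CX" unfolding I'_def
        by (rule ideal_closure.div[OF IC PC(1) Ii Pi Pinv]) (use I'R I'_def in simp)
      have I's: "submodule R I'" using C_ideal[OF I'C] ideal_sub by blast
      have "idl_mult P I' = idl_mult I (idl_mult P (iv P))"
        using I'eq swap3[OF Pp(6) ideal_sub[OF Ii] Pp(1)] by simp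
      also have "\<dots> = I" using Pp(2) mult_R2[OF ideal_sub[OF Ii]] by simp
      finally have PI': "idl_mult P I' = I" .
      have "I \<subseteq> I'" using mult_le_L[OF I's ideal_subR[OF Pi]] PI' by simp
      have "I \<noteq> I'"
      proof
        assume "I = I'"
        then have "idl_mult I P = idl_mult I R" using PI' mult_comm[of I P] mult_R2[OF ideal_sub[OF Ii]] by simp
        then have "P = R" using cancel_eq[OF Iinv Pp(6) sub_R] by simp
        then show False using PC(2) by simp
      qed
      have sub: "{J. ideal_of R J \<and> I' \<subseteq> J} \<subset> {J. ideal_of R J \<and> I \<subseteq> J}"
      proof
        show "{J. ideal_of R J \<and> I' \<subseteq> J} \<subseteq> {J. ideal_of R J \<and> I \<subseteq> J}" using \<open>I \<subseteq> I'\<close> by blast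
        have "I \<notin> {J. ideal_of R J \<and> I' \<subseteq> J}" using \<open>I \<subseteq> I'\<close> \<open>I \<noteq> I'\<close> by blast
        moreover have "I \<in> {J. ideal_of R J \<and> I \<subseteq> J}" using Ii by blast
        ultimately show "{J. ideal_of R J \<and> I' \<subseteq> J} \<noteq> {J. ideal_of R J \<and> I \<subseteq> J}" by blast
      qed
      have "card {J. ideal_of R J \<and> I' \<subseteq> J} < n" using psubset_card_mono[OF finI sub] cn by simp
      then have "I' \<in> gen_subgroup R SX" using less I'C by blast
      then have "idl_mult P I' \<in> gen_subgroup R SX" by (rule gen_subgroup.mult[OF gen_subgroup.gen[OF PS]])
      then show ?thesis using PI' by simp
    qed
  qed
qed

lemma decomp: "I \<in> CX \<Longrightarrow> I \<in> gen_subgroup R SX"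
  using decomp_aux by blast

lemma S_basis: "coprime_basis R X SX"
  unfolding coprime_basis_def
proof (intro conjI ballI impI)
  fix I assume "I \<in> SX"
  then have "I \<in> CX" "I \<noteq> R" unfolding S_char by blast+
  then show "ideal_of R I" "invertible R I" "I \<noteq> R" using C_ideal C_inv by auto
next
  fix I J assume "I \<in> SX" "J \<in> SX" "I \<noteq> J" then show "idl_sum I J = R" by (rule S_cop)
next
  show "X \<subseteq> gen_subgroup R SX" using decomp ideal_closure.base_X by blast
qed

end


lemma int_dep:
  "\<forall>K (v :: 'k \<Rightarrow> nat \<Rightarrow> int). finite K \<and> card K > n \<and> (\<forall>k\<in>K. \<forall>i\<ge>n. v k i = 0) \<longrightarrow>
     (\<exists>c. (\<exists>k\<in>K. c k \<noteq> 0) \<and> (\<forall>i. (\<Sum>k\<in>K. c k * v k i) = 0))"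
proof (induction n)
  case 0
  show ?case
  proof (intro allI impI)
    fix K and v :: "'k \<Rightarrow> nat \<Rightarrow> int"
    assume a: "finite K \<and> card K > 0 \<and> (\<forall>k\<in>K. \<forall>i\<ge>0. v k i = 0)"
    then obtain k0 where "k0 \<in> K" by (metis card_gt_0_iff ex_in_conv)
    have "\<forall>i. (\<Sum>k\<in>K. (\<lambda>k. 1::int) k * v k i) = 0" using a by simp
    then show "\<exists>c. (\<exists>k\<in>K. c k \<noteq> 0) \<and> (\<forall>i. (\<Sum>k\<in>K. c k * v k i) = 0)"
      using \<open>k0 \<in> K\<close> by (intro exI[of _ "\<lambda>k. 1::int"]) auto
  qed
next
  case (Suc m)
  show ?case
  proof (intro allI impI)
    fix K and v :: "'k \<Rightarrow> nat \<Rightarrow> int"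
    assume a: "finite K \<and> card K > Suc m \<and> (\<forall>k\<in>K. \<forall>i\<ge>Suc m. v k i = 0)"
    show "\<exists>c. (\<exists>k\<in>K. c k \<noteq> 0) \<and> (\<forall>i. (\<Sum>k\<in>K. c k * v k i) = 0)"
    proof (cases "\<forall>k\<in>K. v k m = 0")
      case True
      then have "\<forall>k\<in>K. \<forall>i\<ge>m. v k i = 0" using a by (metis Suc_leI le_neq_implies_less)
      moreover have "card K > m" using a by simp
      ultimately show ?thesis using Suc.IH a by blast
    next
      case False
      then obtain k0 where k0: "k0 \<in> K" "v k0 m \<noteq> 0" by blast
      define a0 where "a0 = v k0 m"
      define K' where "K' = K - {k0}"
      define w where "w k i = a0 * v k i - v k m * v k0 i" for k i
      have fK': "finite K'" using a K'_def by simp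
      have "card K' = card K - 1" using a k0(1) unfolding K'_def by (simp add: card_Diff_singleton)
      then have cK': "card K' > m" using a by linarith
      have wz: "\<forall>k\<in>K'. \<forall>i\<ge>m. w k i = 0"
      proof (intro ballI allI impI)
        fix k i assume k: "k \<in> K'" and i: "m \<le> i"
        show "w k i = 0"
        proof (cases "i = m")
          case True then show ?thesis unfolding w_def a0_def by simp
        next
          case False
          then have "i \<ge> Suc m" using i by simp
          then show ?thesis unfolding w_def using a k k0(1) unfolding K'_def by simp
        qed
      qed
      obtain d where d: "\<exists>k\<in>K'. d k \<noteq> 0" "\<forall>i. (\<Sum>k\<in>K'. d k * w k i) = 0"
        using Suc.IH fK' cK' wz by blast
      define c where "c k = (if k = k0 then - (\<Sum>k\<in>K'. d k * v k m) else d k * a0)" for k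
      have "\<exists>k\<in>K. c k \<noteq> 0"
      proof -
        obtain k where "k \<in> K'" "d k \<noteq> 0" using d(1) by blast
        then have "k \<in> K" "k \<noteq> k0" "c k = d k * a0" unfolding K'_def c_def by auto
        moreover have "c k \<noteq> 0" using \<open>c k = d k * a0\<close> \<open>d k \<noteq> 0\<close> k0(2) a0_def by simp
        ultimately show ?thesis by blast
      qed
      moreover have "(\<Sum>k\<in>K. c k * v k i) = 0" for i
      proof -
        have "(\<Sum>k\<in>K. c k * v k i) = c k0 * v k0 i + (\<Sum>k\<in>K'. c k * v k i)"
          using a k0(1) unfolding K'_def by (simp add: sum.remove)
        also have "(\<Sum>k\<in>K'. c k * v k i) = (\<Sum>k\<in>K'. d k * a0 * v k i)"
          unfolding c_def K'_def by (rule sum.cong) auto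
        also have "c k0 * v k0 i = - (\<Sum>k\<in>K'. d k * v k m * v k0 i)"
          unfolding c_def by (simp add: sum_distrib_right)
        also have "- (\<Sum>k\<in>K'. d k * v k m * v k0 i) + (\<Sum>k\<in>K'. d k * a0 * v k i) = (\<Sum>k\<in>K'. d k * w k i)"
          unfolding w_def by (simp add: sum_subtractf[symmetric] algebra_simps)
        also have "\<dots> = 0" using d(2) by simp
        finally show ?thesis .
      qed
      ultimately show ?thesis by blast
    qed
  qed
qed

context rctx begin

lemma of_nat_R: "of_nat k \<in> R"
  by (induction k) (auto intro: R0 R1 Radd)

lemma of_int_R: "of_int z \<in> R"
proof (cases "z \<ge> 0")
  case True
  then have "of_int z = (of_nat (nat z) :: 'a)" by simp
  then show ?thesis using of_nat_R by simp
next
  case False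
  then have "of_int z = - (of_nat (nat (- z)) :: 'a)" by (metis nat_0_le neg_0_le_iff_le nle_le of_int_minus of_int_of_nat_eq minus_minus)
  then show ?thesis using of_nat_R Rneg by simp
qed

lemma sumR: "finite A \<Longrightarrow> (\<And>a. a \<in> A \<Longrightarrow> h a \<in> R) \<Longrightarrow> sum h A \<in> R"
  by (induction A rule: finite_induct) (auto intro: R0 Radd)

lemma pow_R: "x \<in> R \<Longrightarrow> x ^ k \<in> R"
  by (induction k) (auto intro: R1 Rmult)

lemma poly_dep:
  assumes x: "x \<in> R" "x \<noteq> 0"
  shows "\<forall>c. (\<exists>k\<le>N. c k \<noteq> 0) \<and> (\<Sum>k\<le>N. of_int (c k) * x ^ k) = 0 \<longrightarrow>
           (\<exists>m s. m \<noteq> (0::int) \<and> s \<in> R \<and> of_int m = x * s)"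
proof (induction N)
  case 0
  show ?case
  proof (intro allI impI)
    fix c :: "nat \<Rightarrow> int" assume "(\<exists>k\<le>0. c k \<noteq> 0) \<and> (\<Sum>k\<le>0. of_int (c k) * x ^ k) = 0"
    then have "c 0 \<noteq> 0" "of_int (c 0) = (0::'a)" by auto
    moreover have "(0::'a) = x * 0" by simp
    ultimately show "\<exists>m s. m \<noteq> (0::int) \<and> s \<in> R \<and> of_int m = x * s" using R0 by metis
  qed
next
  case (Suc N)
  show ?case
  proof (intro allI impI)
    fix c :: "nat \<Rightarrow> int" assume a: "(\<exists>k\<le>Suc N. c k \<noteq> 0) \<and> (\<Sum>k\<le>Suc N. of_int (c k) * x ^ k) = 0"
    define t where "t = (\<Sum>k\<le>N. of_int (c (Suc k)) * x ^ k)"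
    have tR: "t \<in> R" unfolding t_def
    proof (rule sumR)
      fix k show "of_int (c (Suc k)) * x ^ k \<in> R" by (rule Rmult[OF of_int_R pow_R[OF x(1)]])
    qed simp
    have "(\<Sum>k\<le>Suc N. of_int (c k) * x ^ k) = of_int (c 0) + (\<Sum>k\<le>N. of_int (c (Suc k)) * x ^ Suc k)"
      by (simp only: sum.atMost_Suc_shift power_0 mult_1_right)
    also have "(\<Sum>k\<le>N. of_int (c (Suc k)) * x ^ Suc k) = x * t"
      unfolding t_def sum_distrib_left by (rule sum.cong[OF refl]) (simp add: mult.left_commute)
    finally have e: "of_int (c 0) + x * t = 0" using a by simp
    show "\<exists>m s. m \<noteq> (0::int) \<and> s \<in> R \<and> of_int m = x * s"
    proof (cases "c 0 = 0")
      case False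
      have "of_int (c 0) = - (x * t)" using e by (simp add: eq_neg_iff_add_eq_0)
      also have "\<dots> = x * (- t)" by simp
      finally have "of_int (c 0) = x * (- t)" .
      then show ?thesis using False Rneg[OF tR] by blast
    next
      case True
      then have "x * t = 0" using e by simp
      then have t0: "t = 0" using x(2) by simp
      obtain k where k: "k \<le> Suc N" "c k \<noteq> 0" using a by blast
      have "k \<noteq> 0" using True k(2) by (cases k) auto
      then obtain k' where "k = Suc k'" using not0_implies_Suc by blast
      then have "k' \<le> N" "c (Suc k') \<noteq> 0" using k by auto
      then have "(\<exists>k\<le>N. c (Suc k) \<noteq> 0) \<and> (\<Sum>k\<le>N. of_int (c (Suc k)) * x ^ k) = 0"
        using t0 unfolding t_def by blast
      then show ?thesis using Suc.IH[rule_format, of "\<lambda>k. c (Suc k)"] by blast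
    qed
  qed
qed

end

lemma order_rctx: "is_order R \<Longrightarrow> rctx R"
  unfolding is_order_def rctx_def by blast

lemma order_fin:
  fixes R :: "'a::field set"
  assumes ord: "is_order R" and Ii: "ideal_of R I" and I0: "I \<noteq> {0}"
  shows "finite {J. ideal_of R J \<and> I \<subseteq> J}"
proof -
  interpret rctx R using order_rctx[OF ord] .
  obtain n :: nat and b :: "nat \<Rightarrow> 'a" where bR: "\<forall>i<n. b i \<in> R"
    and rep: "\<forall>r\<in>R. \<exists>!c::nat \<Rightarrow> int. (\<forall>i\<ge>n. c i = 0) \<and> r = (\<Sum>i<n. of_int (c i) * b i)"
    using ord unfolding is_order_def by blast
  define co where "co r = (THE c::nat \<Rightarrow> int. (\<forall>i\<ge>n. c i = 0) \<and> r = (\<Sum>i<n. of_int (c i) * b i))" for r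
  have co: "(\<forall>i\<ge>n. co r i = 0) \<and> r = (\<Sum>i<n. of_int (co r i) * b i)" if "r \<in> R" for r
    unfolding co_def by (rule theI'[OF rep[rule_format, OF that]])
  have Is: "submodule R I" and IR: "I \<subseteq> R" using Ii ideal_sub ideal_subR by auto
  obtain x where xI: "x \<in> I" "x \<noteq> 0" using I0 sub_0[OF Is] by blast
  have xR: "x \<in> R" using xI IR by blast
  \<comment> \<open>a nonzero integer in xR\<close>
  have xk: "x ^ k \<in> R" for k using pow_R[OF xR] .
  obtain c where c: "\<exists>k\<in>{..n}. c k \<noteq> 0" "\<forall>i. (\<Sum>k\<in>{..n}. c k * co (x ^ k) i) = 0"
    using int_dep[rule_format, of "{..n}" n "\<lambda>k. co (x ^ k)"] co[OF xk] by auto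
  have "(\<Sum>k\<le>n. of_int (c k) * x ^ k) = (\<Sum>k\<le>n. of_int (c k) * (\<Sum>i<n. of_int (co (x ^ k) i) * b i))"
  proof (rule sum.cong[OF refl])
    fix k assume "k \<in> {..n}"
    have xke: "x ^ k = (\<Sum>i<n. of_int (co (x ^ k) i) * b i)" using co[OF xk] by blast
    show "of_int (c k) * x ^ k = of_int (c k) * (\<Sum>i<n. of_int (co (x ^ k) i) * b i)"
      by (rule arg_cong[where f="\<lambda>z. of_int (c k) * z", OF xke])
  qed
  also have "\<dots> = (\<Sum>i<n. of_int (\<Sum>k\<le>n. c k * co (x ^ k) i) * b i)"
    by (simp add: sum_distrib_left sum_distrib_right sum.swap[of _ "{..n}"] mult.assoc)
  also have "\<dots> = 0" using c(2) by simp
  finally have "(\<Sum>k\<le>n. of_int (c k) * x ^ k) = 0" .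
  then obtain m s where ms: "m \<noteq> (0::int)" "s \<in> R" "of_int m = x * s"
    using poly_dep[OF xR xI(2), rule_format, of n c] c(1) by auto
  define M where "M = \<bar>m\<bar>"
  have M0: "M > 0" using ms(1) M_def by simp
  have Ms: "\<exists>s'\<in>R. of_int M = x * s'"
  proof (cases "m \<ge> 0")
    case True then show ?thesis using ms M_def by auto
  next
    case False
    then have "of_int M = x * (- s)" using ms(3) M_def by simp
    then show ?thesis using Rneg[OF ms(2)] by blast
  qed
  then obtain s' where s': "s' \<in> R" "of_int M = x * s'" by blast
  have MI: "of_int M * r \<in> I" if "r \<in> R" for r
  proof -
    have "(s' * r) * x \<in> I" using sub_scal[OF Is Rmult[OF s'(1) that] xI(1)] .
    then show ?thesis using s'(2) by (simp add: algebra_simps)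
  qed
  define res where "res r = map (\<lambda>i. co r i mod M) [0..<n]" for r
  define L where "L = {xs. set xs \<subseteq> {0..<M} \<and> length xs = n}"
  have finL: "finite L" unfolding L_def by (rule finite_lists_length_eq) simp
  have resL: "res r \<in> L" for r unfolding res_def L_def using M0 by auto
  have diffI: "r - r' \<in> I" if r: "r \<in> R" "r' \<in> R" "res r = res r'" for r r'
  proof -
    have "\<forall>i<n. co r i mod M = co r' i mod M" using r(3) unfolding res_def by (simp add: list_eq_iff_nth_eq)
    then have dv: "\<forall>i<n. M dvd (co r i - co r' i)" by (simp add: mod_eq_dvd_iff)
    define d where "d i = (co r i - co r' i) div M" for i
    have dd: "co r i - co r' i = M * d i" if "i < n" for i using dv that unfolding d_def by simp
    have "r - r' = (\<Sum>i<n. of_int (co r i) * b i) - (\<Sum>i<n. of_int (co r' i) * b i)"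
      using co[OF r(1)] co[OF r(2)] by simp
    also have "\<dots> = (\<Sum>i<n. of_int (co r i - co r' i) * b i)"
      by (simp add: sum_subtractf[symmetric] algebra_simps)
    also have "\<dots> = (\<Sum>i<n. of_int M * (of_int (d i) * b i))"
      by (rule sum.cong) (auto simp: dd)
    also have "\<dots> = of_int M * (\<Sum>i<n. of_int (d i) * b i)" by (simp add: sum_distrib_left)
    finally have e: "r - r' = of_int M * (\<Sum>i<n. of_int (d i) * b i)" .
    have "(\<Sum>i<n. of_int (d i) * b i) \<in> R" by (rule sumR) (use bR in \<open>auto intro: Rmult of_int_R\<close>)
    then show ?thesis using MI e by simp
  qed
  let ?F = "{J. ideal_of R J \<and> I \<subseteq> J}"
  have recon: "J = {r \<in> R. res r \<in> res ` J}" if J: "J \<in> ?F" for J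
  proof
    have Js: "submodule R J" "J \<subseteq> R" using J ideal_sub ideal_subR by auto
    show "J \<subseteq> {r \<in> R. res r \<in> res ` J}" using Js(2) by blast
    show "{r \<in> R. res r \<in> res ` J} \<subseteq> J"
    proof
      fix r assume "r \<in> {r \<in> R. res r \<in> res ` J}"
      then obtain j where j: "r \<in> R" "j \<in> J" "res r = res j" by blast
      have "r - j \<in> J" using diffI[OF j(1) _ j(3)] j(2) Js(2) J by blast
      then have "(r - j) + j \<in> J" using sub_add[OF Js(1) _ j(2)] by blast
      then show "r \<in> J" by simp
    qed
  qed
  have inj: "inj_on (\<lambda>J. res ` J) ?F"
  proof (rule inj_onI)
    fix J J' assume "J \<in> ?F" "J' \<in> ?F" "res ` J = res ` J'"
    then show "J = J'" using recon[of J] recon[of J'] by simp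
  qed
  have "(\<lambda>J. res ` J) ` ?F \<subseteq> Pow L" using resL by blast
  moreover have "finite (Pow L)" using finL by simp
  ultimately show ?thesis using inj inj_on_finite by blast
qed



lemma gen_sub_mono:
  assumes h: "\<And>P. P \<in> S \<Longrightarrow> P \<in> gen_subgroup R C \<and> colon R R P \<in> gen_subgroup R C"
  shows "gen_subgroup R S \<subseteq> gen_subgroup R C"
proof
  fix g assume "g \<in> gen_subgroup R S"
  then show "g \<in> gen_subgroup R C"
  proof (induction rule: gen_subgroup.induct)
    case one then show ?case by (rule gen_subgroup.one)
  next
    case (gen I) then show ?case using h by blast
  next
    case (inv I) then show ?case using h by blast
  next
    case (mult I J) show ?case by (rule gen_subgroup.mult[OF mult(3) mult(4)])
  qed
qed

theorem proposition4p67: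
  fixes R :: "'a::field set" and X :: "'a set set"
  assumes "is_order R"
    and "\<forall>I\<in>X. ideal_of R I \<and> I \<noteq> {0}"
  shows "((ideal_closure R X \<subseteq> {I. invertible R I}) \<longleftrightarrow> (\<exists>B. coprime_basis R X B)) \<and>
         ((\<exists>B. coprime_basis R X B) \<longrightarrow>
           (let S = {I \<in> ideal_closure R X. card {J \<in> ideal_closure R X. I \<subseteq> J} = 2}
            in coprime_basis R X S \<and>
               (\<forall>C. coprime_basis R X C \<longrightarrow> gen_subgroup R S \<subseteq> gen_subgroup R C)))"
proof -
  have rc: "rctx R" by (rule order_rctx[OF assms(1)])
  interpret rctx R by (rule rc)
  have XI: "\<And>I. I \<in> X \<Longrightarrow> ideal_of R I" using assms(2) by blast
  have finI: "\<And>I. ideal_of R I \<Longrightarrow> I \<noteq> {0} \<Longrightarrow> finite {J. ideal_of R J \<and> I \<subseteq> J}"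
    using order_fin[OF assms(1)] by blast
  define S where "S = {I \<in> ideal_closure R X. card {J \<in> ideal_closure R X. I \<subseteq> J} = 2}"
  have cb: "cbasis R B" if "coprime_basis R X B" for B
    using rc that unfolding cbasis_def cbasis_axioms_def coprime_basis_def by blast
  have closA: "ideal_closure R X \<subseteq> bmono R B \<and> (\<forall>I\<in>bmono R B. invertible R I \<and> I \<in> gen_subgroup R B \<and> colon R R I \<in> gen_subgroup R B)"
    if B: "coprime_basis R X B" for B
  proof -
    interpret cbasis R B by (rule cb[OF B])
    have XG: "X \<subseteq> gen_subgroup R B" using B unfolding coprime_basis_def by blast
    have "ideal_closure R X \<subseteq> bmono R B"
      using closure_MB[OF XG] XI ideal_subR by blast
    moreover have "\<forall>I\<in>bmono R B. invertible R I \<and> I \<in> gen_subgroup R B \<and> colon R R I \<in> gen_subgroup R B"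
      using mono_inv mono_G mono_ivG by blast
    ultimately show ?thesis by blast
  qed
  have AtoB: "coprime_basis R X S" if ci: "ideal_closure R X \<subseteq> {I. invertible R I}"
  proof -
    interpret octx R X
    proof (unfold_locales)
      show "\<And>I. I \<in> X \<Longrightarrow> ideal_of R I" by (rule XI)
      show "\<And>I. I \<in> ideal_closure R X \<Longrightarrow> invertible R I" using ci by blast
      show "\<And>I. ideal_of R I \<Longrightarrow> I \<noteq> {0} \<Longrightarrow> finite {J. ideal_of R J \<and> I \<subseteq> J}" by (rule finI)
    qed
    have "SX = S" unfolding SX_def S_def by simp
    then show ?thesis using S_basis by simp
  qed
  have BtoA: "ideal_closure R X \<subseteq> {I. invertible R I}" if "coprime_basis R X B" for B
    using closA[OF that] by blast
  have iff: "(ideal_closure R X \<subseteq> {I. invertible R I}) \<longleftrightarrow> (\<exists>B. coprime_basis R X B)"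
    using AtoB BtoA by blast
  have second: "coprime_basis R X S \<and> (\<forall>C. coprime_basis R X C \<longrightarrow> gen_subgroup R S \<subseteq> gen_subgroup R C)"
    if ex: "\<exists>B. coprime_basis R X B"
  proof -
    have ci: "ideal_closure R X \<subseteq> {I. invertible R I}" using iff ex by blast
    have Sb: "coprime_basis R X S" by (rule AtoB[OF ci])
    have SC: "S \<subseteq> ideal_closure R X" unfolding S_def by blast
    have "gen_subgroup R S \<subseteq> gen_subgroup R C" if C: "coprime_basis R X C" for C
    proof (rule gen_sub_mono)
      fix P assume "P \<in> S"
      then have "P \<in> bmono R C" using SC closA[OF C] by blast
      then show "P \<in> gen_subgroup R C \<and> colon R R P \<in> gen_subgroup R C" using closA[OF C] by blast
    qed
    then show ?thesis using Sb by blast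
  qed
  show ?thesis unfolding Let_def using iff second S_def by simp
qed


end
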